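(* Let $\mathcal{F}=(W,\preceq,\mathcal{V})$ be a finite poset model and $B\subseteq W\times W$ a weak $\pm$-bisimulation. For all $w_1,w_2$ with $B(w_1,w_2)$ and every $\downarrow$-path $\pi_1:[0;k_1]\to W$ from $w_1$, there is a $\downarrow$-path $\pi_2:[0;k_2]\to W$ from $w_2$ such that $B(\pi_1(k_1),\pi_2(k_2))$ and for each $j\in[0;k_2)$ there is $i\in[0;k_1)$ with $B(\pi_1(i),\pi_2(j))$.
   Context: Fix a set PL of proposition letters. A poset model is $\mathcal{F}=(W,\preceq,\mathcal{V})$ with $(W,\preceq)$ a partial order and $\mathcal{V}:\mathrm{PL}\to\mathcal{P}(W)$. $[m;n]=\{i\in\mathbb{N}:m\le i\le n\}$, $[m;n)=\{i:m\le i<n\}$. An undirected path of length $\ell$ from $w$ is $\pi:[0;\ell]\to W$ with $\pi(0)=w$ and, for each $i\in[0;\ell)$, $\pi(i)\preceq\pi(i+1)$ or $\pi(i+1)\preceq\pi(i)$. A $\downarrow$-path is an undirected path of length $\ell\ge1$ with $\pi(\ell)\preceq\pi(\ell-1)$. A $\pm$-path is a $\downarrow$-path of length $\ell\ge2$ with $\pi(0)\preceq\pi(1)$. A weak $\pm$-bisimulation is a symmetric relation $B\subseteq W\times W$ such that whenever $B(w_1,w_2)$: (1) for every $p\in\mathrm{PL}$, $w_1\in\mathcal{V}(p)$ iff $w_2\in\mathcal{V}(p)$; (2) for all $u_1,d_1\in W$ with ($w_1\preceq u_1$ or $u_1\preceq w_1$) and $d_1\preceq u_1$, there is a $\pm$-path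 $\pi_2:[0;\ell_2]\to W$ from $w_2$ with $B(d_1,\pi_2(\ell_2))$ and, for all $j\in[0;\ell_2)$, $B(w_1,\pi_2(j))$ or $B(u_1,\pi_2(j))$. *)

theory Defs
  imports Main
begin

definition poset_model :: "'w set \<Rightarrow> ('w \<Rightarrow> 'w \<Rightarrow> bool) \<Rightarrow> ('p \<Rightarrow> 'w set) \<Rightarrow> bool" where
  "poset_model W le V \<longleftrightarrow>
     (\<forall>x\<in>W. le x x) \<and>
     (\<forall>x\<in>W. \<forall>y\<in>W. le x y \<and> le y x \<longrightarrow> x = y) \<and>
     (\<forall>x\<in>W. \<forall>y\<in>W. \<forall>z\<in>W. le x y \<and> le y z \<longrightarrow> le x z) \<and>
     (\<forall>x y. le x y \<longrightarrow> x \<in> W \<and> y \<in> W) \<and>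
     (\<forall>p. V p \<subseteq> W)"

definition undirected_path :: "'w set \<Rightarrow> ('w \<Rightarrow> 'w \<Rightarrow> bool) \<Rightarrow> (nat \<Rightarrow> 'w) \<Rightarrow> nat \<Rightarrow> 'w \<Rightarrow> bool" where
  "undirected_path W le \<pi> l w \<longleftrightarrow>
     (\<forall>i\<le>l. \<pi> i \<in> W) \<and> \<pi> 0 = w \<and>
     (\<forall>i<l. le (\<pi> i) (\<pi> (Suc i)) \<or> le (\<pi> (Suc i)) (\<pi> i))"

definition down_path :: "'w set \<Rightarrow> ('w \<Rightarrow> 'w \<Rightarrow> bool) \<Rightarrow> (nat \<Rightarrow> 'w) \<Rightarrow> nat \<Rightarrow> 'w \<Rightarrow> bool" where
  "down_path W le \<pi> l w \<longleftrightarrow>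
     undirected_path W le \<pi> l w \<and> 1 \<le> l \<and> le (\<pi> l) (\<pi> (l - 1))"

definition pm_path :: "'w set \<Rightarrow> ('w \<Rightarrow> 'w \<Rightarrow> bool) \<Rightarrow> (nat \<Rightarrow> 'w) \<Rightarrow> nat \<Rightarrow> 'w \<Rightarrow> bool" where
  "pm_path W le \<pi> l w \<longleftrightarrow>
     down_path W le \<pi> l w \<and> 2 \<le> l \<and> le (\<pi> 0) (\<pi> 1)"

definition weak_pm_bisim :: "'w set \<Rightarrow> ('w \<Rightarrow> 'w \<Rightarrow> bool) \<Rightarrow> ('p \<Rightarrow> 'w set) \<Rightarrow> ('w \<Rightarrow> 'w \<Rightarrow> bool) \<Rightarrow> bool" where
  "weak_pm_bisim W le V B \<longleftrightarrow>
     (\<forall>x y. B x y \<longrightarrow> x \<in> W \<and> y \<in> W) \<and>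
     (\<forall>x y. B x y \<longrightarrow> B y x) \<and>
     (\<forall>w1 w2. B w1 w2 \<longrightarrow>
        (\<forall>p. w1 \<in> V p \<longleftrightarrow> w2 \<in> V p) \<and>
        (\<forall>u1 d1. (le w1 u1 \<or> le u1 w1) \<and> le d1 u1 \<longrightarrow>
           (\<exists>\<pi>2 l2. pm_path W le \<pi>2 l2 w2 \<and> B d1 (\<pi>2 l2) \<and>
              (\<forall>j<l2. B w1 (\<pi>2 j) \<or> B u1 (\<pi>2 j)))))"

end

theory Submission
  imports Defs
begin

lemma concat_path:
  assumes "undirected_path W le p m a" "undirected_path W le q l (p m)"
  shows "undirected_path W le (\<lambda>j. if j \<le> m then p j else q (j - m)) (m + l) a"
  unfolding undirected_path_def
proof (intro conjI allI impI)
  fix i assume "i \<le> m + l"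
  then show "(if i \<le> m then p i else q (i - m)) \<in> W"
    using assms unfolding undirected_path_def by auto
next
  show "(if 0 \<le> m then p 0 else q (0 - m)) = a" using assms unfolding undirected_path_def by auto
next
  fix i assume i: "i < m + l"
  show "le (if i \<le> m then p i else q (i - m)) (if Suc i \<le> m then p (Suc i) else q (Suc i - m)) \<or>
        le (if Suc i \<le> m then p (Suc i) else q (Suc i - m)) (if i \<le> m then p i else q (i - m))"
  proof (cases "Suc i \<le> m")
    case True then show ?thesis using assms unfolding undirected_path_def by auto
  next
    case False
    then have "Suc i - m = Suc (i - m)" "i - m < l" using i by auto
    moreover have "q (i - m) = (if i \<le> m then p i else q (i - m))"
      using False assms(2) unfolding undirected_path_def by (cases "i = m") auto
    moreover have "(if Suc i \<le> m then p (Suc i) else q (Suc i - m)) = q (Suc (i - m))"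
      using False \<open>Suc i - m = Suc (i - m)\<close> by simp
    moreover have "le (q (i - m)) (q (Suc (i - m))) \<or> le (q (Suc (i - m))) (q (i - m))"
      using \<open>i - m < l\<close> assms(2) unfolding undirected_path_def by blast
    ultimately show ?thesis by simp
  qed
qed

lemma bisim_step:
  assumes "weak_pm_bisim W le V B" "B a b" "le a u \<or> le u a" "le d u"
  shows "\<exists>\<pi>2 l2. pm_path W le \<pi>2 l2 b \<and> B d (\<pi>2 l2) \<and>
              (\<forall>j<l2. B a (\<pi>2 j) \<or> B u (\<pi>2 j))"
  using assms(1)[unfolded weak_pm_bisim_def, THEN conjunct2, THEN conjunct2, rule_format,
      OF assms(2), THEN conjunct2, rule_format, OF conjI[OF assms(3,4)]] .

lemma sim_path:
  assumes pm: "poset_model W le V" and bs: "weak_pm_bisim W le V B"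
  shows "undirected_path W le \<pi>1 n w1 \<Longrightarrow> B w1 w2 \<Longrightarrow>
    \<exists>\<pi>2 m. undirected_path W le \<pi>2 m w2 \<and> B (\<pi>1 n) (\<pi>2 m) \<and>
           (\<forall>j<m. \<exists>i\<le>n. B (\<pi>1 i) (\<pi>2 j))"
proof (induction n)
  case 0
  have "\<forall>x y. B x y \<longrightarrow> x \<in> W \<and> y \<in> W" using bs unfolding weak_pm_bisim_def by (rule conjunct1)
  then have "w2 \<in> W" using 0 by blast
  then have "undirected_path W le (\<lambda>_. w2) 0 w2" unfolding undirected_path_def by auto
  moreover have "\<pi>1 0 = w1" using 0(1) unfolding undirected_path_def by simp
  ultimately show ?case using 0 by (intro exI[of _ "\<lambda>_. w2"] exI[of _ 0]) simp
next
  case (Suc n)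
  have up: "undirected_path W le \<pi>1 n w1" using Suc.prems(1) unfolding undirected_path_def by auto
  obtain p m where p: "undirected_path W le p m w2" "B (\<pi>1 n) (p m)"
    "\<forall>j<m. \<exists>i\<le>n. B (\<pi>1 i) (p j)" using Suc.IH[OF up Suc.prems(2)] by (elim exE conjE)
  have st: "le (\<pi>1 n) (\<pi>1 (Suc n)) \<or> le (\<pi>1 (Suc n)) (\<pi>1 n)" and inW: "\<pi>1 (Suc n) \<in> W"
    using Suc.prems(1) unfolding undirected_path_def by auto
  have rf: "le (\<pi>1 (Suc n)) (\<pi>1 (Suc n))" using pm[unfolded poset_model_def, THEN conjunct1] inW by blast
  obtain q l where q: "pm_path W le q l (p m)" "B (\<pi>1 (Suc n)) (q l)"
     "\<forall>j<l. B (\<pi>1 n) (q j) \<or> B (\<pi>1 (Suc n)) (q j)"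
    using bisim_step[OF bs p(2) st rf] by (elim exE conjE)
  have qu: "undirected_path W le q l (p m)" using q(1) unfolding pm_path_def down_path_def by auto
  have l1: "1 \<le> l" using q(1) unfolding pm_path_def down_path_def by auto
  let ?r = "\<lambda>j. if j \<le> m then p j else q (j - m)"
  have "undirected_path W le ?r (m + l) w2" by (rule concat_path[OF p(1) qu])
  moreover have "B (\<pi>1 (Suc n)) (?r (m + l))" using q(2) l1 by auto
  moreover have "\<forall>j<m+l. \<exists>i\<le>Suc n. B (\<pi>1 i) (?r j)"
  proof (intro allI impI)
    fix j assume j: "j < m + l"
    show "\<exists>i\<le>Suc n. B (\<pi>1 i) (?r j)"
    proof (cases "j < m")
      case True then show ?thesis using p(3) by (auto intro: le_SucI)
    next
      case False
      then have "j - m < l" using j by auto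
      then have "B (\<pi>1 n) (q (j - m)) \<or> B (\<pi>1 (Suc n)) (q (j - m))" using q(3) by auto
      moreover have "?r j = q (j - m)" using False qu unfolding undirected_path_def
        by (cases "j = m") auto
      ultimately show ?thesis by (metis le_SucI order_refl)
    qed
  qed
  ultimately show ?case by (intro exI[of _ ?r] exI[of _ "m + l"]) blast
qed

theorem lemma9:
  fixes W :: "'w set" and le :: "'w \<Rightarrow> 'w \<Rightarrow> bool" and V :: "'p \<Rightarrow> 'w set"
    and B :: "'w \<Rightarrow> 'w \<Rightarrow> bool"
  assumes "poset_model W le V" and "finite W"
    and "weak_pm_bisim W le V B"
    and "B w1 w2"
    and "down_path W le \<pi>1 k1 w1"
  shows "\<exists>\<pi>2 k2. down_path W le \<pi>2 k2 w2 \<and> B (\<pi>1 k1) (\<pi>2 k2) \<and>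
           (\<forall>j<k2. \<exists>i<k1. B (\<pi>1 i) (\<pi>2 j))"
proof -
  have k1: "1 \<le> k1" and dn: "le (\<pi>1 k1) (\<pi>1 (k1 - 1))"
    and u: "undirected_path W le \<pi>1 k1 w1" using assms(5) unfolding down_path_def by auto
  have up: "undirected_path W le \<pi>1 (k1 - 1) w1" using u unfolding undirected_path_def by auto
  obtain p m where p: "undirected_path W le p m w2" "B (\<pi>1 (k1 - 1)) (p m)"
    "\<forall>j<m. \<exists>i\<le>k1 - 1. B (\<pi>1 i) (p j)"
    using sim_path[OF assms(1,3) up assms(4)] by (elim exE conjE)
  have inW: "\<pi>1 (k1 - 1) \<in> W" using u unfolding undirected_path_def by auto
  have rf: "le (\<pi>1 (k1 - 1)) (\<pi>1 (k1 - 1))" using assms(1)[unfolded poset_model_def, THEN conjunct1] inW by blast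
  obtain q l where q: "pm_path W le q l (p m)" "B (\<pi>1 k1) (q l)"
     "\<forall>j<l. B (\<pi>1 (k1 - 1)) (q j) \<or> B (\<pi>1 (k1 - 1)) (q j)"
    using bisim_step[OF assms(3) p(2) disjI1[OF rf] dn] by (elim exE conjE)
  have qu: "undirected_path W le q l (p m)" and l1: "1 \<le> l" and qd: "le (q l) (q (l - 1))"
    using q(1) unfolding pm_path_def down_path_def by auto
  let ?r = "\<lambda>j. if j \<le> m then p j else q (j - m)"
  have "undirected_path W le ?r (m + l) w2" by (rule concat_path[OF p(1) qu])
  moreover have "le (?r (m + l)) (?r (m + l - 1))"
  proof (cases "l = 1")
    case True
    then have "?r (m + l - 1) = q (l - 1)" using qu unfolding undirected_path_def by auto
    then show ?thesis using qd l1 by auto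
  next
    case False
    then have "?r (m + l - 1) = q (l - 1)" using l1 by auto
    then show ?thesis using qd l1 by auto
  qed
  moreover have "B (\<pi>1 k1) (?r (m + l))" using q(2) l1 by auto
  moreover have "\<forall>j<m+l. \<exists>i<k1. B (\<pi>1 i) (?r j)"
  proof (intro allI impI)
    fix j assume j: "j < m + l"
    show "\<exists>i<k1. B (\<pi>1 i) (?r j)"
    proof (cases "j < m")
      case True
      then obtain i where "i \<le> k1 - 1" "B (\<pi>1 i) (p j)" using p(3) by blast
      moreover have "i < k1" using \<open>i \<le> k1 - 1\<close> k1 by simp
      ultimately show ?thesis using True by auto
    next
      case False
      then have "j - m < l" using j by auto
      then have "B (\<pi>1 (k1 - 1)) (q (j - m))" using q(3) by auto
      moreover have "?r j = q (j - m)" using False qu unfolding undirected_path_def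
        by (cases "j = m") auto
      moreover have "k1 - 1 < k1" using k1 by simp
      ultimately show ?thesis by metis
    qed
  qed
  ultimately show ?thesis unfolding down_path_def using l1
    by (intro exI[of _ ?r] exI[of _ "m + l"]) auto
qed

end
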